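(* Let $m,n$ be positive coprime integers with $1\le m/n\le 2$ and $3\nmid(m+n)$, let $\theta\in[\pi/3,\pi/2]$ satisfy $\cos\theta = \frac{|n^2+2mn-2m^2|}{2(m^2-mn+n^2)}$, and let $$\Gamma_\theta = \frac12\begin{bmatrix} m+n & m-2n\\ (m-n)\sqrt3 & m\sqrt3\end{bmatrix}\mathbb{Z}^2.$$ Then for every $\Omega\in C_h(\theta)$, $|\Gamma_\theta|\le|\Omega|$.
   Context: $\Lambda_h = \begin{bmatrix} 1 & -1/2 \\ 0 & \sqrt3/2\end{bmatrix}\mathbb{Z}^2$. For a full-rank lattice $\Gamma\subset\mathbb{R}^2$, $|\Gamma|=\min\{\|y\|^2:y\in\Gamma\setminus\{0\}\}$. $\Gamma$ is well-rounded (WR) if it has a basis of vectors of squared norm $|\Gamma|$; such a basis can be chosen with angle in $[\pi/3,\pi/2]$ between its vectors, and this angle $\theta(\Gamma)$ is an invariant. $\mathrm{WR}(\Lambda_h)$ is the set of full-rank WR sublattices of $\Lambda_h$, and $C_h(\theta)=\{\Omega\in\mathrm{WR}(\Lambda_h):\theta(\Omega)=\theta\}$. *)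

theory Defs
  imports "HOL-Analysis.Analysis"
begin

definition lattice_span :: "real^2 \<Rightarrow> real^2 \<Rightarrow> (real^2) set" where
  "lattice_span a b = {of_int i *\<^sub>R a + of_int j *\<^sub>R b | i j. True}"

definition indep2 :: "real^2 \<Rightarrow> real^2 \<Rightarrow> bool" where
  "indep2 a b \<longleftrightarrow> a$1 * b$2 - a$2 * b$1 \<noteq> 0"

definition is_basis2 :: "(real^2) set \<Rightarrow> real^2 \<Rightarrow> real^2 \<Rightarrow> bool" where
  "is_basis2 L a b \<longleftrightarrow> indep2 a b \<and> L = lattice_span a b"

definition full_rank_lattice :: "(real^2) set \<Rightarrow> bool" where
  "full_rank_lattice L \<longleftrightarrow> (\<exists>a b. is_basis2 L a b)"

definition lattice_min :: "(real^2) set \<Rightarrow> real" where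
  "lattice_min L = Inf {norm y ^ 2 | y. y \<in> L - {0}}"

definition vec_angle :: "real^2 \<Rightarrow> real^2 \<Rightarrow> real" where
  "vec_angle a b = arccos (inner a b / (norm a * norm b))"

definition wr_basis :: "(real^2) set \<Rightarrow> real^2 \<Rightarrow> real^2 \<Rightarrow> bool" where
  "wr_basis L a b \<longleftrightarrow> is_basis2 L a b \<and> norm a ^ 2 = lattice_min L \<and>
     norm b ^ 2 = lattice_min L"

definition well_rounded :: "(real^2) set \<Rightarrow> bool" where
  "well_rounded L \<longleftrightarrow> full_rank_lattice L \<and> (\<exists>a b. wr_basis L a b)"

definition wr_angle :: "(real^2) set \<Rightarrow> real" where
  "wr_angle L = (THE t. \<exists>a b. wr_basis L a b \<and> vec_angle a b = t \<and>
       pi / 3 \<le> t \<and> t \<le> pi / 2)"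

definition Lambda_h :: "(real^2) set" where
  "Lambda_h = lattice_span (vector [1, 0]) (vector [-1/2, sqrt 3 / 2])"

definition C_h :: "real \<Rightarrow> (real^2) set set" where
  "C_h t = {\<Omega>. \<Omega> \<subseteq> Lambda_h \<and> full_rank_lattice \<Omega> \<and> well_rounded \<Omega> \<and> wr_angle \<Omega> = t}"

definition Gamma_theta :: "int \<Rightarrow> int \<Rightarrow> (real^2) set" where
  "Gamma_theta m n = lattice_span
     (vector [(of_int m + of_int n) / 2, (of_int m - of_int n) * sqrt 3 / 2])
     (vector [(of_int m - 2 * of_int n) / 2, of_int m * sqrt 3 / 2])"

end

theory Submission
  imports Defs "HOL-Computational_Algebra.Primes"
begin

lemma prime_bad:
  fixes m n q :: int
  assumes "coprime m n" "\<not> 3 dvd (m+n)" "prime q"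
    and "q dvd (n^2 + 2*m*n - 2*m^2)" "q dvd (m^2 - m*n + n^2)"
  shows False
proof -
  have nu: "\<not> is_unit q" using assms(3) not_prime_unit by blast
  have "q dvd (n^2 + 2*m*n - 2*m^2) - (m^2 - m*n + n^2)" using assms(4,5) by (rule dvd_diff)
  moreover have "(n^2 + 2*m*n - 2*m^2) - (m^2 - m*n + n^2) = 3 * (m * (n - m))" by (simp add: algebra_simps power2_eq_square)
  ultimately have "q dvd 3 * (m * (n-m))" by simp
  hence "q dvd 3 \<or> q dvd (m * (n-m))" by (rule prime_dvd_multD[OF assms(3)])
  hence c: "q dvd 3 \<or> q dvd m \<or> q dvd (n - m)" using prime_dvd_multD[OF assms(3), of m "n-m"] by blast
  have qm: False if "q dvd m"
  proof -
    have "q dvd (m^2 - m*n + n^2) - m * (m - n)" using assms(5) that by (intro dvd_diff dvd_mult2)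
    moreover have "(m^2 - m*n + n^2) - m * (m - n) = n^2" by (simp add: algebra_simps power2_eq_square)
    ultimately have "q dvd n^2" by simp
    hence "q dvd n" by (rule prime_dvd_power[OF assms(3)])
    hence "\<not> coprime m n" using not_coprimeI[OF that _ nu] by blast
    thus False using assms(1) by contradiction
  qed
  show False
  proof (cases "q dvd 3")
    case True
    have "q > 1" using assms(3) prime_gt_1_int by blast
    moreover have "q \<le> 3" using True zdvd_imp_le by simp
    ultimately have "q = 2 \<or> q = 3" by arith
    moreover have "\<not> (2::int) dvd 3" by simp
    ultimately have q3: "q = 3" using True by blast
    have "q dvd (m^2 - m*n + n^2) + q * (m*n)" by (rule dvd_add[OF assms(5) dvd_triv_left])
    moreover have "(m^2 - m*n + n^2) + 3 * (m*n) = (m+n)^2" by (simp add: algebra_simps power2_eq_square)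
    ultimately have "q dvd (m+n)^2" using q3 by simp
    hence "q dvd m+n" by (rule prime_dvd_power[OF assms(3)])
    thus False using assms(2) q3 by simp
  next
    case False
    show False
    proof (cases "q dvd m")
      case True thus False using qm by blast
    next
      case F2: False
      hence "q dvd (n - m)" using c False by blast
      hence "q dvd (m^2 - m*n + n^2) - n * (n - m)" by (rule dvd_diff[OF assms(5) dvd_mult])
      moreover have "(m^2 - m*n + n^2) - n * (n - m) = m^2" by (simp add: algebra_simps power2_eq_square)
      ultimately have "q dvd m^2" by simp
      hence "q dvd m" by (rule prime_dvd_power[OF assms(3)])
      thus False using qm by blast
    qed
  qed
qed

lemma coprime_DN:
  fixes m n :: int
  assumes "coprime m n" "\<not> 3 dvd (m+n)" "m^2 - m*n + n^2 \<noteq> 0"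
  shows "coprime (n^2 + 2*m*n - 2*m^2) (m^2 - m*n + n^2)"
  unfolding coprime_def
proof (intro allI impI)
  fix c assume c: "c dvd (n^2 + 2*m*n - 2*m^2)" "c dvd (m^2 - m*n + n^2)"
  show "is_unit c"
  proof (rule ccontr)
    assume nu: "\<not> is_unit c"
    have "c \<noteq> 0" using c(2) assms(3) by auto
    then obtain q where q: "q dvd c" "prime q" using prime_divisor_exists nu by blast
    have "q dvd (n^2 + 2*m*n - 2*m^2)" using q(1) c(1) by (rule dvd_trans)
    moreover have "q dvd (m^2 - m*n + n^2)" using q(1) c(2) by (rule dvd_trans)
    ultimately
    show False using prime_bad[OF assms(1,2) q(2)] by blast
  qed
qed

lemma inner2: "inner (x::real^2) y = x$1*y$1 + x$2*y$2"
  by (simp add: inner_vec_def sum_2)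

lemma normsq2: "norm (x::real^2) ^ 2 = x$1^2 + x$2^2"
  unfolding power2_norm_eq_inner inner2 by (simp add: power2_eq_square)

lemma lattice_min_le:
  assumes "y \<in> L" "y \<noteq> 0"
  shows "lattice_min L \<le> norm y ^ 2"
  unfolding lattice_min_def
  by (rule cInf_lower) (use assms in \<open>auto intro: bdd_belowI[of _ 0]\<close>)

lemma in_span1: "a \<in> lattice_span a b"
  unfolding lattice_span_def by (rule CollectI, rule exI[of _ 1], rule exI[of _ 0]) simp

lemma in_span2: "b \<in> lattice_span a b"
  unfolding lattice_span_def by (rule CollectI, rule exI[of _ 0], rule exI[of _ 1]) simp

lemma Lambda_h_elem:
  assumes "y \<in> Lambda_h"
  obtains i j :: int where "y$1 = of_int i - of_int j / 2" "y$2 = of_int j * sqrt 3 / 2"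
  using assms unfolding Lambda_h_def lattice_span_def by auto

lemma int_forms:
  fixes i j k l :: int and s :: real
  assumes "s * s = 3"
  shows "(of_int i - of_int j / 2)^2 + (of_int j * s / 2)^2 = of_int (i^2 - i*j + j^2)"
    and "2 * ((of_int i - of_int j / 2) * (of_int k - of_int l / 2) + (of_int j * s / 2) * (of_int l * s / 2))
         = of_int (2*i*k - i*l - j*k + 2*j*l)"
proof -
  have h: "\<And>x. s*(s*x) = 3*x" using assms by (metis mult.assoc)
  have "(of_int j * s / 2)^2 = real_of_int j * real_of_int j * (s * s) / 4" by (simp add: power2_eq_square)
  thus "(of_int i - of_int j / 2)^2 + (of_int j * s / 2)^2 = of_int (i^2 - i*j + j^2)"
    using assms by (simp add: power2_eq_square algebra_simps h)
  have "(of_int j * s / 2) * (of_int l * s / 2) = real_of_int j * real_of_int l * (s * s) / 4" by simp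
  thus "2 * ((of_int i - of_int j / 2) * (of_int k - of_int l / 2) + (of_int j * s / 2) * (of_int l * s / 2))
         = of_int (2*i*k - i*l - j*k + 2*j*l)"
    using assms by (simp add: algebra_simps h)
qed

definition det2 :: "real^2 \<Rightarrow> real^2 \<Rightarrow> real" where
  "det2 a b = a$1 * b$2 - a$2 * b$1"

lemma lagrange: "inner a b ^ 2 + det2 a b ^ 2 = norm a ^ 2 * norm b ^ 2"
  unfolding normsq2 by (simp add: inner2 det2_def power2_eq_square algebra_simps)

lemma det_mult:
  assumes "c = of_int i1 *\<^sub>R a + of_int j1 *\<^sub>R b" "d = of_int i2 *\<^sub>R a + of_int j2 *\<^sub>R b"
  shows "det2 c d = of_int (i1*j2 - j1*i2) * det2 a b"
  using assms by (simp add: det2_def algebra_simps)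

lemma in_span_E:
  assumes "c \<in> lattice_span a b"
  obtains i j :: int where "c = of_int i *\<^sub>R a + of_int j *\<^sub>R b"
  using assms unfolding lattice_span_def by auto

lemma det_inv:
  assumes "indep2 a b" "lattice_span a b = lattice_span c d"
  shows "\<bar>det2 a b\<bar> = \<bar>det2 c d\<bar>"
proof -
  have "c \<in> lattice_span a b" using in_span1[of c d] assms(2) by simp
  then obtain i1 j1 where 1: "c = of_int i1 *\<^sub>R a + of_int j1 *\<^sub>R b" by (rule in_span_E)
  have "d \<in> lattice_span a b" using in_span2[of d c] assms(2) by simp
  then obtain i2 j2 where 2: "d = of_int i2 *\<^sub>R a + of_int j2 *\<^sub>R b" by (rule in_span_E)
  have "a \<in> lattice_span c d" using in_span1[of a b] assms(2) by simp
  then obtain i3 j3 where 3: "a = of_int i3 *\<^sub>R c + of_int j3 *\<^sub>R d" by (rule in_span_E)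
  have "b \<in> lattice_span c d" using in_span2[of b a] assms(2) by simp
  then obtain i4 j4 where 4: "b = of_int i4 *\<^sub>R c + of_int j4 *\<^sub>R d" by (rule in_span_E)
  define k where "k = i1*j2 - j1*i2"
  define k' where "k' = i3*j4 - j3*i4"
  have e1: "det2 c d = of_int k * det2 a b" using det_mult[OF 1 2] unfolding k_def .
  have e2: "det2 a b = of_int k' * det2 c d" using det_mult[OF 3 4] unfolding k'_def .
  have nz: "det2 a b \<noteq> 0" using assms(1) unfolding indep2_def det2_def .
  have h: "det2 a b = of_int k' * (of_int k * det2 a b)" using e2 unfolding e1 .
  have "(of_int k' * of_int k) * det2 a b = 1 * det2 a b"
    unfolding mult.assoc mult_1_left by (rule h[symmetric])
  hence "of_int k' * of_int k = (1::real)" using mult_right_cancel[OF nz] by blast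
  hence "of_int (k' * k) = (1::real)" by (simp only: of_int_mult)
  hence "k' * k = 1" by (simp only: of_int_eq_1_iff)
  hence "\<bar>k * k'\<bar> = 1" by (simp only: mult.commute abs_one)
  hence kk: "\<bar>k\<bar> = 1" by (rule abs_zmult_eq_1)
  have "\<bar>det2 c d\<bar> = \<bar>of_int k\<bar> * \<bar>det2 a b\<bar>" unfolding e1 by (rule abs_mult)
  also have "\<bar>of_int k :: real\<bar> = 1" using kk by (simp only: of_int_abs[symmetric] of_int_1)
  finally show ?thesis by simp
qed
lemma div_bounds: "(L::real) > 0 \<Longrightarrow> \<bar>x\<bar> \<le> L \<Longrightarrow> -1 \<le> x / L \<and> x / L \<le> 1"
  by (simp add: abs_le_iff pos_le_divide_eq)

lemma wr_facts:
  assumes "wr_basis W a b"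
  shows "lattice_min W > 0" "norm a * norm b = lattice_min W" "a \<in> W" "b \<in> W"
    "\<bar>inner a b\<bar> \<le> lattice_min W"
    "vec_angle a b = arccos (inner a b / lattice_min W)"
    "norm a ^ 2 = lattice_min W" "norm b ^ 2 = lattice_min W"
    "indep2 a b" "W = lattice_span a b"
proof -
  have ib: "indep2 a b" "W = lattice_span a b" and na: "norm a ^ 2 = lattice_min W"
    and nb: "norm b ^ 2 = lattice_min W"
    using assms by (auto simp: wr_basis_def is_basis2_def)
  show "indep2 a b" "W = lattice_span a b" "norm a ^ 2 = lattice_min W" "norm b ^ 2 = lattice_min W"
    using ib na nb by auto
  have "a \<noteq> 0" using ib(1) by (auto simp: indep2_def)
  thus pos: "lattice_min W > 0" using na by (metis zero_less_norm_iff zero_less_power)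
  have "norm a = norm b" using na nb by (metis norm_ge_zero power2_eq_imp_eq)
  thus nn: "norm a * norm b = lattice_min W" using na by (simp add: power2_eq_square)
  show "a \<in> W" "b \<in> W" using ib(2) in_span1 in_span2 by auto
  show "\<bar>inner a b\<bar> \<le> lattice_min W" using Cauchy_Schwarz_ineq2[of a b] nn by simp
  show "vec_angle a b = arccos (inner a b / lattice_min W)" unfolding vec_angle_def nn ..
qed

lemma angle_unique:
  assumes "wr_basis W a b" "wr_basis W c d" "vec_angle a b \<le> pi/2" "pi/3 \<le> vec_angle a b"
    "vec_angle c d \<le> pi/2" "pi/3 \<le> vec_angle c d"
  shows "vec_angle a b = vec_angle c d"
proof -
  note A = wr_facts[OF assms(1)] and C = wr_facts[OF assms(2)]
  define L where "L = lattice_min W"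
  define x1 where "x1 = inner a b / L"
  define x2 where "x2 = inner c d / L"
  have L: "L > 0" unfolding L_def by (rule A(1))
  have x1b: "-1 \<le> x1 \<and> x1 \<le> 1" unfolding x1_def by (rule div_bounds[OF L]) (unfold L_def, rule A(5))
  have x2b: "-1 \<le> x2 \<and> x2 \<le> 1" unfolding x2_def by (rule div_bounds[OF L]) (unfold L_def, rule C(5))
  have t1: "vec_angle a b = arccos x1" unfolding x1_def L_def by (rule A(6))
  have t2: "vec_angle c d = arccos x2" unfolding x2_def L_def by (rule C(6))
  have pi: "pi > 0" by (rule pi_gt_zero)
  have "0 \<le> cos (vec_angle a b)" by (rule cos_ge_zero) (use assms(3,4) pi in linarith)+
  hence p1: "0 \<le> x1" unfolding t1 using cos_arccos x1b by metis
  have "0 \<le> cos (vec_angle c d)" by (rule cos_ge_zero) (use assms(5,6) pi in linarith)+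
  hence p2: "0 \<le> x2" unfolding t2 using cos_arccos x2b by metis
  have "lattice_span a b = lattice_span c d" unfolding A(10)[symmetric] C(10)[symmetric] by (rule refl)
  hence "\<bar>det2 a b\<bar> = \<bar>det2 c d\<bar>" by (rule det_inv[OF A(9)])
  hence "\<bar>det2 a b\<bar> ^ 2 = \<bar>det2 c d\<bar> ^ 2" by (rule arg_cong)
  hence dd: "det2 a b ^ 2 = det2 c d ^ 2" unfolding power2_abs .
  have l1: "inner a b ^ 2 + det2 a b ^ 2 = L * L" using lagrange[of a b] unfolding A(7) A(8) L_def .
  have l2: "inner c d ^ 2 + det2 c d ^ 2 = L * L" using lagrange[of c d] unfolding C(7) C(8) L_def .
  have ii: "inner a b ^ 2 = inner c d ^ 2" using l1 l2 dd by linarith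
  have "x1 ^ 2 = x2 ^ 2" unfolding x1_def x2_def power_divide ii by (rule refl)
  hence "x1 = x2" using p1 p2 by (rule power2_eq_imp_eq)
  thus ?thesis unfolding t1 t2 by simp
qed

lemma angle_exists:
  assumes "wr_basis W a b"
  shows "\<exists>a' b'. wr_basis W a' b' \<and> pi/3 \<le> vec_angle a' b' \<and> vec_angle a' b' \<le> pi/2"
proof -
  define b' where "b' = (if inner a b \<ge> 0 then b else -b)"
  have span: "lattice_span a b' = lattice_span a b"
  proof (cases "inner a b \<ge> 0")
    case False
    hence "b' = -b" by (simp add: b'_def)
    moreover have "lattice_span a (-b) = lattice_span a b"
    proof -
      have "\<And>i j. of_int i *\<^sub>R a + of_int j *\<^sub>R (-b) = of_int i *\<^sub>R a + of_int (-j) *\<^sub>R b" by simp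
      hence "{of_int i *\<^sub>R a + of_int j *\<^sub>R (-b) | i j. True} = {of_int i *\<^sub>R a + of_int j *\<^sub>R b | i j. True}"
      proof (intro set_eqI iffI)
        fix x assume "x \<in> {of_int i *\<^sub>R a + of_int j *\<^sub>R (-b) | i j. True}"
        then obtain i j where "x = of_int i *\<^sub>R a + of_int j *\<^sub>R (-b)" by blast
        hence "x = of_int i *\<^sub>R a + of_int (-j) *\<^sub>R b" by simp
        thus "x \<in> {of_int i *\<^sub>R a + of_int j *\<^sub>R b | i j. True}" by blast
      next
        fix x assume "x \<in> {of_int i *\<^sub>R a + of_int j *\<^sub>R b | i j. True}"
        then obtain i j where "x = of_int i *\<^sub>R a + of_int j *\<^sub>R b" by blast
        hence "x = of_int i *\<^sub>R a + of_int (-j) *\<^sub>R (-b)" by simp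
        thus "x \<in> {of_int i *\<^sub>R a + of_int j *\<^sub>R (-b) | i j. True}" by blast
      qed
      thus ?thesis unfolding lattice_span_def .
    qed
    ultimately show ?thesis by simp
  qed (simp add: b'_def)
  note A = wr_facts[OF assms]
  have wr: "wr_basis W a b'"
    using assms span A(9) unfolding wr_basis_def is_basis2_def b'_def indep2_def by auto
  note B = wr_facts[OF wr]
  define L where "L = lattice_min W"
  have L: "L > 0" using A L_def by simp
  have ip: "inner a b' \<ge> 0" unfolding b'_def by auto
  have "a - b' \<in> W"
  proof -
    have "a - b' = of_int 1 *\<^sub>R a + of_int (-1) *\<^sub>R b'" by simp
    thus ?thesis using B(10) unfolding lattice_span_def by blast
  qed
  moreover have "a - b' \<noteq> 0" using B(9) unfolding indep2_def by auto
  ultimately have "L \<le> norm (a - b') ^ 2" using lattice_min_le L_def by simp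
  also have "norm (a - b') ^ 2 = norm a ^ 2 - 2 * inner a b' + norm b' ^ 2"
    by (simp add: power2_norm_eq_inner inner_diff inner_commute algebra_simps)
  finally have "2 * inner a b' \<le> L" using B(7,8) L_def by simp
  hence x: "0 \<le> inner a b' / L" "inner a b' / L \<le> 1/2" using ip L by (auto simp: divide_simps)
  have "arccos (inner a b' / L) \<le> arccos 0" by (rule arccos_le_arccos) (use x in linarith)+
  moreover have "arccos (1/2) \<le> arccos (inner a b' / L)" by (rule arccos_le_arccos) (use x in linarith)+
  ultimately show ?thesis using wr B(6) L_def by (metis arccos_0 arccos_one_half)
qed

lemma wr_angle_prop:
  assumes "well_rounded W"
  shows "\<exists>a b. wr_basis W a b \<and> vec_angle a b = wr_angle W \<and> pi / 3 \<le> wr_angle W \<and> wr_angle W \<le> pi / 2"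
proof -
  let ?P = "\<lambda>t. \<exists>a b. wr_basis W a b \<and> vec_angle a b = t \<and> pi / 3 \<le> t \<and> t \<le> pi / 2"
  obtain a b where "wr_basis W a b" using assms unfolding well_rounded_def by blast
  then obtain a' b' where ab: "wr_basis W a' b'" "pi/3 \<le> vec_angle a' b'" "vec_angle a' b' \<le> pi/2"
    using angle_exists by blast
  have "\<exists>!t. ?P t"
  proof (rule ex1I[of _ "vec_angle a' b'"])
    show "?P (vec_angle a' b')" using ab by blast
  next
    fix t assume "?P t"
    then obtain c d where "wr_basis W c d" "vec_angle c d = t" "pi / 3 \<le> t" "t \<le> pi / 2" by blast
    thus "t = vec_angle a' b'" using angle_unique[OF ab(1) _ ab(3,2)] by auto
  qed
  hence "?P (THE t. ?P t)" by (rule theI')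
  thus ?thesis unfolding wr_angle_def .
qed



lemma ratio_eq:
  fixes x L d N p :: real
  assumes "L > 0" "N > 0" "2 * x = p" "x / L = d / (2 * N)"
  shows "p * N = d * L"
proof -
  have "x * (2 * N) = d * L" using assms(1,2,4) by (simp add: field_simps)
  thus ?thesis using assms(3) by (simp add: algebra_simps)
qed

lemma normv0:
  fixes x y :: real
  shows "((x + y) / 2)^2 + ((x - y) * sqrt 3 / 2)^2 = x^2 - x*y + y^2"
proof -
  have e1: "((x + y) / 2)^2 = (x + y)^2 / 4" by (simp add: power_divide)
  have e2: "((x - y) * sqrt 3 / 2)^2 = 3 * (x - y)^2 / 4"
    by (simp add: power_mult_distrib power_divide)
  have e3: "(x + y)^2 + 3 * (x - y)^2 = 4 * (x^2 - x*y + y^2)"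
    by (simp add: power2_eq_square algebra_simps)
  have "((x + y) / 2)^2 + ((x - y) * sqrt 3 / 2)^2 = ((x + y)^2 + 3 * (x - y)^2) / 4"
    unfolding e1 e2 by (simp add: add_divide_distrib)
  also have "... = x^2 - x*y + y^2" unfolding e3 by simp
  finally show ?thesis .
qed

lemma normv:
  fixes m n :: int
  shows "((of_int m + of_int n) / 2)^2 + ((of_int m - of_int n) * sqrt 3 / 2)^2 = real_of_int (m^2 - m*n + n^2)"
  unfolding normv0 by simp

theorem lemma4p8:
  fixes m n :: int and \<theta> :: real
  assumes "m > 0" and "n > 0" and "coprime m n"
    and "1 \<le> real_of_int m / real_of_int n" and "real_of_int m / real_of_int n \<le> 2"
    and "\<not> (3 dvd (m + n))"
    and "pi / 3 \<le> \<theta>" and "\<theta> \<le> pi / 2"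
    and "cos \<theta> = real_of_int \<bar>n^2 + 2*m*n - 2*m^2\<bar> / (2 * real_of_int (m^2 - m*n + n^2))"
  shows "\<forall>\<Omega> \<in> C_h \<theta>. lattice_min (Gamma_theta m n) \<le> lattice_min \<Omega>"
proof
  fix W assume "W \<in> C_h \<theta>"
  hence sub: "W \<subseteq> Lambda_h" and wrd: "well_rounded W" and ang: "wr_angle W = \<theta>"
    unfolding C_h_def by blast+
  define D where "D = n^2 + 2*m*n - 2*m^2"
  define N where "N = m^2 - m*n + n^2"
  have Npos: "N > 0"
  proof -
    have "N = (m - n)^2 + m*n" unfolding N_def by (simp add: power2_eq_square algebra_simps)
    moreover have "m * n > 0" using assms(1,2) by simp
    moreover have "(m - n)^2 \<ge> 0" by simp
    ultimately show ?thesis by linarith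
  qed
  obtain a b where ab: "wr_basis W a b" "vec_angle a b = \<theta>"
    using wr_angle_prop[OF wrd] unfolding ang by blast
  note F = wr_facts[OF ab(1)]
  define L where "L = lattice_min W"
  have L: "L > 0" using F(1) unfolding L_def .
  have iL: "\<bar>inner a b\<bar> \<le> L" using F(5) unfolding L_def .
  have xb: "-1 \<le> inner a b / L" "inner a b / L \<le> 1" using div_bounds[OF L iL]
    by blast+
  have "\<theta> = arccos (inner a b / L)" unfolding L_def ab(2)[symmetric] by (rule F(6))
  hence cth: "cos \<theta> = inner a b / L" using cos_arccos xb by metis
  obtain i j where a1: "a$1 = of_int i - of_int j / 2" and a2: "a$2 = of_int j * sqrt 3 / 2"
    using Lambda_h_elem[of a] sub F(3) by blast
  obtain k l where b1: "b$1 = of_int k - of_int l / 2" and b2: "b$2 = of_int l * sqrt 3 / 2"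
    using Lambda_h_elem[of b] sub F(4) by blast
  have s3: "sqrt 3 * sqrt 3 = (3::real)" by simp
  define Li where "Li = i^2 - i*j + j^2"
  define p where "p = 2*i*k - i*l - j*k + 2*j*l"
  have "L = (of_int i - of_int j / 2)^2 + (of_int j * sqrt 3 / 2)^2"
    using F(7) unfolding normsq2 a1 a2 L_def by (rule sym)
  also have "... = of_int Li" unfolding Li_def by (rule int_forms(1)[OF s3])
  finally have LLi: "L = of_int Li" .
  have ip: "2 * inner a b = of_int p"
    unfolding inner2 a1 a2 b1 b2 p_def by (rule int_forms(2)[OF s3])
  have Lipos: "Li > 0" using L LLi by simp
  have rq: "inner a b / L = real_of_int \<bar>D\<bar> / (2 * real_of_int N)"
    using cth assms(9) unfolding D_def N_def by linarith
  have Npr: "real_of_int N > 0" using Npos by simp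
  have "real_of_int p * of_int N = of_int \<bar>D\<bar> * L"
    by (rule ratio_eq[OF L Npr ip rq])
  hence "real_of_int (p * N) = real_of_int (\<bar>D\<bar> * Li)" unfolding LLi by simp
  hence eq: "p * N = \<bar>D\<bar> * Li" by (simp only: of_int_eq_iff)
  have "N \<noteq> 0" using Npos by simp
  hence "coprime D N" unfolding D_def N_def by (rule coprime_DN[OF assms(3,6)])
  hence cN: "coprime N \<bar>D\<bar>" by (simp add: coprime_commute)
  have "N dvd \<bar>D\<bar> * Li" unfolding eq[symmetric] by (rule dvd_triv_right)
  hence "N dvd Li" using coprime_dvd_mult_right_iff[OF cN] by blast
  hence NLi: "N \<le> Li" using Lipos by (rule zdvd_imp_le)
  define v where "v = (vector [(of_int m + of_int n) / 2, (of_int m - of_int n) * sqrt 3 / 2] :: real^2)"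
  have vin: "v \<in> Gamma_theta m n"
    unfolding Gamma_theta_def v_def by (rule in_span1)
  have v1: "v$1 = (of_int m + of_int n) / 2" unfolding v_def by simp
  have v2: "v$2 = (of_int m - of_int n) * sqrt 3 / 2" unfolding v_def by simp
  have "v$1 > 0" unfolding v1 using assms(1,2) by simp
  have "v \<noteq> 0"
  proof
    assume "v = 0"
    hence "v$1 = 0" by simp
    thus False using \<open>v$1 > 0\<close> by simp
  qed
  hence "lattice_min (Gamma_theta m n) \<le> norm v ^ 2" using vin lattice_min_le by blast
  also have "norm v ^ 2 = of_int N"
    unfolding normsq2 v1 v2 N_def by (rule normv)
  also have "... \<le> L" using NLi LLi by simp
  finally show "lattice_min (Gamma_theta m n) \<le> lattice_min W" unfolding L_def .
qed

end
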